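(* Let $N\ge3$, $N_e\ge 2$, $L\ge1$ be integers, $P>0$, $\tau\in(0,1)$, $\sigma_r>0$, $c_4\in\mathbb{C}\setminus\{0\}$, $\alpha,\beta\in\mathbb{C}$ with $|\alpha|^2+|\beta|^2=1$, $\alpha\ne0$. For $\theta\in(-\pi/2,\pi/2)$ and $\mathbf{h}\in\mathbb{C}^N\setminus\mathrm{span}(\mathbf{a}(\theta))$, let $\tilde{\mathbf{a}}=\mathbf{a}/\|\mathbf{a}\|$, $\tilde{\mathbf{h}}=\frac{\mathbf{h}-(\tilde{\mathbf{a}}^H\mathbf{h})\tilde{\mathbf{a}}}{\|\mathbf{h}-(\tilde{\mathbf{a}}^H\mathbf{h})\tilde{\mathbf{a}}\|}$, $\mathbf{t}_1=\alpha\tilde{\mathbf{a}}+\beta\tilde{\mathbf{h}}$, $\mathbf{t}_3,\dots,\mathbf{t}_N$ an orthonormal basis of the orthogonal complement of $\mathrm{span}\{\tilde{\mathbf{a}},\tilde{\mathbf{h}}\}$, and $\mathbf{R}_x=P\tau\mathbf{t}_1\mathbf{t}_1^H+\frac{(1-\tau)P}{N-2}\sum_{i=3}^N\mathbf{t}_i\mathbf{t}_i^H$. For $\phi\in(-\pi/2,\pi/2)$ define $\mathrm{CRB}(\phi)=\frac{\sigma_r^2}{2|c_4|^2L\|\mathbf{c}'(\phi)\|^2\,\mathbf{a}^H\mathbf{R}_x\mathbf{a}}$. Then $$\mathrm{CRB}(\phi)=\frac{\sigma_r^2}{2|c_4|^2L\,P\tau\,\|\mathbf{c}'\|^2|\alpha|^2N},\qquad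 \|\mathbf{c}'\|^2=\frac{\pi^2\cos^2(\phi)N_e(N_e^2-1)}{12}.$$ Moreover, if $\phi\sim\mathcal{U}(-\pi/2,\pi/2)$ then for $\epsilon>0$, with $u(\epsilon)=\sqrt6\,\sigma_r\big(\epsilon N_eN\pi^2LP|c_4|^2|\alpha|^2\tau(N_e^2-1)\big)^{-1/2}$, $P(\mathrm{CRB}(\phi)>\epsilon)=\frac2\pi\sin^{-1}(u(\epsilon))$ if $u(\epsilon)<1$, and $=1$ otherwise.
   Context: $j=\sqrt{-1}$. $\mathbf{a}(\theta)\in\mathbb{C}^N$ has $i$-th entry $e^{-j\pi\sin(\theta)\frac{N-(2i-1)}{2}}$; $\mathbf{c}(\phi)\in\mathbb{C}^{N_e}$ has $i$-th entry $e^{-j\pi\sin(\phi)\frac{N_e-(2i-1)}{2}}$ and $\mathbf{c}'=\partial\mathbf{c}/\partial\phi$. $\mathrm{CRB}(\phi)$ is the Cramér–Rao bound of a strong sensing eavesdropper (one knowing the transmitted signal) for the target angle $\phi$, under the SSJB precoding scheme with transmit covariance $\mathbf{R}_x$. *)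

theory Defs
  imports "HOL-Probability.Probability"
begin

text \<open>Vectors in C^M are represented as functions nat => complex, indexed by 1..M.\<close>

definition steer :: "nat \<Rightarrow> real \<Rightarrow> nat \<Rightarrow> complex" where
  "steer M x i = exp (- \<i> * complex_of_real (pi * sin x * (real M - (2 * real i - 1)) / 2))"

definition avec :: "nat \<Rightarrow> real \<Rightarrow> nat \<Rightarrow> complex" where
  "avec N \<theta> = steer N \<theta>"

definition cvec :: "nat \<Rightarrow> real \<Rightarrow> nat \<Rightarrow> complex" where
  "cvec Ne \<phi> = steer Ne \<phi>"

definition cder :: "nat \<Rightarrow> real \<Rightarrow> nat \<Rightarrow> complex" where
  "cder Ne \<phi> i = vector_derivative (\<lambda>x. cvec Ne x i) (at \<phi>)"

definition cinner :: "nat \<Rightarrow> (nat \<Rightarrow> complex) \<Rightarrow> (nat \<Rightarrow> complex) \<Rightarrow> complex" where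
  "cinner M u v = (\<Sum>i=1..M. cnj (u i) * v i)"

definition vnorm :: "nat \<Rightarrow> (nat \<Rightarrow> complex) \<Rightarrow> real" where
  "vnorm M v = sqrt (\<Sum>i=1..M. (cmod (v i))^2)"

definition atil :: "nat \<Rightarrow> real \<Rightarrow> nat \<Rightarrow> complex" where
  "atil N \<theta> = (\<lambda>i. avec N \<theta> i / complex_of_real (vnorm N (avec N \<theta>)))"

definition htil :: "nat \<Rightarrow> real \<Rightarrow> (nat \<Rightarrow> complex) \<Rightarrow> nat \<Rightarrow> complex" where
  "htil N \<theta> h =
     (let w = (\<lambda>i. h i - cinner N (atil N \<theta>) h * atil N \<theta> i)
      in (\<lambda>i. w i / complex_of_real (vnorm N w)))"

definition t1vec :: "nat \<Rightarrow> complex \<Rightarrow> complex \<Rightarrow> real \<Rightarrow> (nat \<Rightarrow> complex) \<Rightarrow> nat \<Rightarrow> complex" where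
  "t1vec N \<alpha> \<beta> \<theta> h = (\<lambda>i. \<alpha> * atil N \<theta> i + \<beta> * htil N \<theta> h i)"

definition Rx :: "nat \<Rightarrow> real \<Rightarrow> real \<Rightarrow> complex \<Rightarrow> complex \<Rightarrow> real \<Rightarrow> (nat \<Rightarrow> complex)
                  \<Rightarrow> (nat \<Rightarrow> nat \<Rightarrow> complex) \<Rightarrow> nat \<Rightarrow> nat \<Rightarrow> complex" where
  "Rx N P \<tau> \<alpha> \<beta> \<theta> h t = (\<lambda>i k.
      complex_of_real (P * \<tau>) * t1vec N \<alpha> \<beta> \<theta> h i * cnj (t1vec N \<alpha> \<beta> \<theta> h k)
    + complex_of_real ((1 - \<tau>) * P / (real N - 2)) * (\<Sum>m=3..N. t m i * cnj (t m k)))"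

definition qform :: "nat \<Rightarrow> (nat \<Rightarrow> nat \<Rightarrow> complex) \<Rightarrow> (nat \<Rightarrow> complex) \<Rightarrow> complex" where
  "qform M R v = (\<Sum>i=1..M. \<Sum>k=1..M. cnj (v i) * R i k * v k)"

text \<open>CRB(phi); a^H R_x a is real (R_x Hermitian), its real part is taken.\<close>
definition CRB :: "nat \<Rightarrow> nat \<Rightarrow> nat \<Rightarrow> real \<Rightarrow> real \<Rightarrow> real \<Rightarrow> complex \<Rightarrow> complex \<Rightarrow> complex
                   \<Rightarrow> real \<Rightarrow> (nat \<Rightarrow> complex) \<Rightarrow> (nat \<Rightarrow> nat \<Rightarrow> complex) \<Rightarrow> real \<Rightarrow> real" where
  "CRB N Ne L P \<tau> \<sigma>r c4 \<alpha> \<beta> \<theta> h t \<phi> =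
     \<sigma>r^2 / (2 * (cmod c4)^2 * real L * (vnorm Ne (cder Ne \<phi>))^2
              * Re (qform N (Rx N P \<tau> \<alpha> \<beta> \<theta> h t) (avec N \<theta>)))"

end

theory Submission
  imports Defs
begin

lemma cder_eq:
  "cder Ne \<phi> i = - \<i> * complex_of_real (pi * cos \<phi> * (real Ne - (2 * real i - 1)) / 2) * cvec Ne \<phi> i"
proof -
  let ?k = "(real Ne - (2 * real i - 1))"
  have f: "((\<lambda>x. complex_of_real (pi * sin x * ?k / 2)) has_vector_derivative
            complex_of_real (pi * cos \<phi> * ?k / 2)) (at \<phi>)"
    by (rule has_vector_derivative_of_real) (auto intro!: derivative_eq_intros)
  have g: "((\<lambda>z. exp (- \<i> * z)) has_field_derivative (- \<i> * exp (- \<i> * complex_of_real (pi * sin \<phi> * ?k / 2))))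
            (at (complex_of_real (pi * sin \<phi> * ?k / 2)))"
    by (auto intro!: derivative_eq_intros)
  have e: "(\<lambda>x. cvec Ne x i) = (\<lambda>z. exp (- \<i> * z)) \<circ> (\<lambda>x. complex_of_real (pi * sin x * ?k / 2))"
    by (simp add: fun_eq_iff cvec_def steer_def)
  have "((\<lambda>x. cvec Ne x i) has_vector_derivative
      complex_of_real (pi * cos \<phi> * ?k / 2) * (- \<i> * exp (- \<i> * complex_of_real (pi * sin \<phi> * ?k / 2)))) (at \<phi>)"
    unfolding e by (rule field_vector_diff_chain_at[OF f g])
  note D = this
  show ?thesis unfolding cder_def vector_derivative_at[OF D]
    by (simp only: cvec_def steer_def ac_simps)
qed

lemma sum_sq_id: "(\<Sum>i=1..n. (real n - (2 * real i - 1))^2) = real n * ((real n)^2 - 1) / 3"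
proof -
  have s1: "(\<Sum>i=1..n. real i) = real n * (real n + 1) / 2" for n
    by (induction n) (auto simp: field_simps)
  have s2: "(\<Sum>i=1..n. (real i)^2) = real n * (real n + 1) * (2 * real n + 1) / 6" for n
    by (induction n) (auto simp: field_simps power2_eq_square)
  have "(\<Sum>i=1..n. (real n - (2 * real i - 1))^2) = (\<Sum>i=1..n. (real n + 1)^2 - 4 * (real n + 1) * real i + 4 * (real i)^2)"
    by (rule sum.cong) (auto simp: power2_eq_square algebra_simps)
  also have "\<dots> = real n * (real n + 1)^2 - 4 * (real n + 1) * (\<Sum>i=1..n. real i) + 4 * (\<Sum>i=1..n. (real i)^2)"
    by (simp add: sum.distrib sum_subtractf sum_distrib_left)
  also have "\<dots> = real n * ((real n)^2 - 1) / 3"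
    unfolding s1 s2 by (simp add: field_simps power2_eq_square)
  finally show ?thesis .
qed

lemma cmod_steer[simp]: "cmod (steer M x i) = 1"
  unfolding steer_def by (simp add: norm_exp_eq_Re)

lemma vnorm_cder: "(vnorm Ne (cder Ne \<phi>))^2 = pi^2 * (cos \<phi>)^2 * real Ne * ((real Ne)^2 - 1) / 12"
proof -
  have "(vnorm Ne (cder Ne \<phi>))^2 = (\<Sum>i=1..Ne. (cmod (cder Ne \<phi> i))^2)"
    unfolding vnorm_def by (simp add: sum_nonneg)
  also have "\<dots> = (\<Sum>i=1..Ne. pi^2 * (cos \<phi>)^2 / 4 * (real Ne - (2 * real i - 1))^2)"
  proof (rule sum.cong)
    fix i assume "i \<in> {1..Ne}"
    have "cmod (cder Ne \<phi> i) = cmod (- \<i>) * cmod (complex_of_real (pi * cos \<phi> * (real Ne - (2 * real i - 1)) / 2)) * cmod (cvec Ne \<phi> i)"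
      unfolding cder_eq norm_mult by simp
    also have "\<dots> = \<bar>pi * cos \<phi> * (real Ne - (2 * real i - 1)) / 2\<bar>"
      unfolding norm_of_real by (simp add: cvec_def)
    finally have X: "cmod (cder Ne \<phi> i) = \<bar>pi * cos \<phi> * (real Ne - (2 * real i - 1)) / 2\<bar>" .
    show "(cmod (cder Ne \<phi> i))^2 = pi^2 * (cos \<phi>)^2 / 4 * (real Ne - (2 * real i - 1))^2"
      unfolding X power2_abs by (simp add: power_mult_distrib power_divide)
  qed simp
  also have "\<dots> = pi^2 * (cos \<phi>)^2 / 4 * (real Ne * ((real Ne)^2 - 1) / 3)"
    unfolding sum_distrib_left[symmetric] sum_sq_id ..
  finally show ?thesis by simp
qed


lemma cinner_cnj: "cnj (cinner M v x) = (\<Sum>k=1..M. cnj (x k) * v k)"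
  unfolding cinner_def by (simp add: mult.commute)

lemma qform_expand:
  "qform M (\<lambda>i k. c1 * x i * cnj (x k) + c2 * (\<Sum>m\<in>S. y m i * cnj (y m k))) v =
   c1 * (cinner M v x * cnj (cinner M v x)) + c2 * (\<Sum>m\<in>S. cinner M v (y m) * cnj (cinner M v (y m)))"
proof -
  have "qform M (\<lambda>i k. c1 * x i * cnj (x k) + c2 * (\<Sum>m\<in>S. y m i * cnj (y m k))) v =
     (\<Sum>i=1..M. \<Sum>k=1..M. c1 * ((cnj (v i) * x i) * (cnj (x k) * v k)) + c2 * (\<Sum>m\<in>S. (cnj (v i) * y m i) * (cnj (y m k) * v k)))"
    unfolding qform_def
    by (intro sum.cong refl) (simp add: algebra_simps sum_distrib_left sum_distrib_right)
  also have "\<dots> = c1 * (\<Sum>i=1..M. \<Sum>k=1..M. (cnj (v i) * x i) * (cnj (x k) * v k))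
      + c2 * (\<Sum>m\<in>S. \<Sum>i=1..M. \<Sum>k=1..M. (cnj (v i) * y m i) * (cnj (y m k) * v k))"
    by (simp add: sum.distrib sum_distrib_left sum.swap[of _ S])
  also have "\<dots> = c1 * (cinner M v x * cnj (cinner M v x)) + c2 * (\<Sum>m\<in>S. cinner M v (y m) * cnj (cinner M v (y m)))"
    unfolding cinner_cnj by (simp add: cinner_def sum_product)
  finally show ?thesis .
qed



lemma vnorm_avec: "vnorm N (avec N \<theta>) = sqrt (real N)"
  unfolding vnorm_def avec_def by simp

lemma cinner_aa: "cinner N (avec N \<theta>) (avec N \<theta>) = of_nat N"
proof -
  have "cnj (avec N \<theta> i) * avec N \<theta> i = 1" for i
    using complex_norm_square[of "avec N \<theta> i"]
    by (simp add: mult.commute avec_def)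
  then show ?thesis unfolding cinner_def by simp
qed

lemma cinner_div_left: "cinner M (\<lambda>i. u i / complex_of_real r) v = cinner M u v / complex_of_real r"
  unfolding cinner_def by (simp add: sum_divide_distrib)

lemma cinner_div_right: "cinner M u (\<lambda>i. v i / c) = cinner M u v / c"
  unfolding cinner_def by (simp add: sum_divide_distrib)

lemma cinner_lin_right: "cinner M u (\<lambda>i. a * v i + b * w i) = a * cinner M u v + b * cinner M u w"
  unfolding cinner_def by (simp add: algebra_simps sum.distrib sum_distrib_left)

lemma cinner_diff_right: "cinner M u (\<lambda>i. v i - b * w i) = cinner M u v - b * cinner M u w"
  unfolding cinner_def by (simp add: algebra_simps sum_subtractf sum_distrib_left)

lemma cinner_a_atil: assumes "N > 0" shows "cinner N (avec N \<theta>) (atil N \<theta>) = of_real (sqrt (real N))"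
proof -
  have "cinner N (avec N \<theta>) (atil N \<theta>) = of_nat N / of_real (sqrt (real N))"
    unfolding atil_def vnorm_avec cinner_div_right cinner_aa ..
  also have "\<dots> = of_real (sqrt (real N))"
    using assms by (simp add: field_simps flip: of_real_mult)
  finally show ?thesis .
qed

lemma cinner_atil_left: "cinner N (atil N \<theta>) v = cinner N (avec N \<theta>) v / of_real (sqrt (real N))"
  unfolding atil_def vnorm_avec cinner_div_left ..

lemma cinner_a_htil: assumes "N > 0" shows "cinner N (avec N \<theta>) (htil N \<theta> h) = 0"
proof -
  have "cinner N (avec N \<theta>) (\<lambda>i. h i - cinner N (atil N \<theta>) h * atil N \<theta> i) = 0"
    unfolding cinner_diff_right cinner_a_atil[OF assms] cinner_atil_left
    using assms by simp
  then show ?thesis unfolding htil_def Let_def cinner_div_right by simp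
qed


lemma meas_set: "{\<phi> \<in> {-pi/2<..<pi/2}. cos \<phi> < u} \<in> sets lborel"
  by measurable

lemma cos_less_iff:
  assumes "\<phi> \<in> {-pi/2<..<pi/2}" "0 \<le> a" "a \<le> pi"
  shows "cos \<phi> < cos a \<longleftrightarrow> a < \<bar>\<phi>\<bar>"
proof -
  have "cos \<phi> = cos \<bar>\<phi>\<bar>" by simp
  moreover have "\<bar>\<phi>\<bar> \<le> pi" using assms(1) by auto
  ultimately show ?thesis using cos_mono_less_eq[of "\<bar>\<phi>\<bar>" a] assms by simp
qed

lemma meas_uniform:
  assumes "u > 0"
  shows "measure (uniform_measure lborel {-pi/2<..<pi/2}) {\<phi> \<in> {-pi/2<..<pi/2}. cos \<phi> < u}
         = (if u < 1 then 2 / pi * arcsin u else 1)"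
proof -
  let ?S = "{-pi/2<..<pi/2::real}"
  let ?A = "{\<phi> \<in> ?S. cos \<phi> < u}"
  have mS: "measure lborel ?S = pi" by simp
  have "measure (uniform_measure lborel ?S) ?A = measure lborel (?S \<inter> ?A) / measure lborel ?S"
    by (rule measure_uniform_measure) (auto simp: meas_set)
  also have "?S \<inter> ?A = ?A" by auto
  finally have eq: "measure (uniform_measure lborel ?S) ?A = measure lborel ?A / pi" by simp
  show ?thesis
  proof (cases "u < 1")
    case True
    define a where "a = arccos u"
    have as: "arcsin u > 0" using arcsin_less_arcsin[of 0 u] assms True by simp
    have ac: "a = pi/2 - arcsin u" unfolding a_def using assms True by (simp add: arccos_arcsin_eq)
    have a0: "0 < a" unfolding a_def using arccos_lt_bounded[of u] assms True by simp
    have a1: "a < pi/2" using ac as by simp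
    have ca: "cos a = u" unfolding a_def using assms True by simp
    have Aeq: "?A = {-pi/2<..<-a} \<union> {a<..<pi/2}"
    proof (rule set_eqI)
      fix x
      show "x \<in> ?A \<longleftrightarrow> x \<in> {-pi/2<..<-a} \<union> {a<..<pi/2}"
      proof (cases "x \<in> ?S")
        case True
        then show ?thesis using cos_less_iff[OF True, of a] a0 a1 ca by auto
      next
        case False
        then show ?thesis using a0 a1 by auto
      qed
    qed
    have "measure lborel ?A = measure lborel {-pi/2<..<-a} + measure lborel {a<..<pi/2}"
      unfolding Aeq using a0 a1 by (intro measure_Union) auto
    also have "\<dots> = pi - 2 * a" using a0 a1 by simp
    finally show ?thesis using eq True ac by (simp add: field_simps)
  next
    case False
    let ?Z = "{\<phi> \<in> ?S. \<not> cos \<phi> < u}"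
    have "?Z \<subseteq> {0}"
    proof
      fix x assume x: "x \<in> ?Z"
      then have "\<not> cos x < cos 0" using False by auto
      then have "\<not> 0 < \<bar>x\<bar>" using cos_less_iff[of x 0] x by auto
      then show "x \<in> {0}" by simp
    qed
    then have "countable ?Z" by (rule countable_subset) simp
    then have Z: "?Z \<in> null_sets lborel" by (rule countable_imp_null_set_lborel)
    have AZ: "?A = ?S - ?Z" by blast
    have "measure lborel ?A = measure lborel ?S" unfolding AZ by (rule measure_Diff_null_set[OF _ Z]) simp
    then show ?thesis using eq False by simp
  qed
qed


theorem lemma4:
  fixes N Ne L :: nat and P \<tau> \<sigma>r \<theta> :: real and c4 \<alpha> \<beta> :: complex
    and h :: "nat \<Rightarrow> complex" and t :: "nat \<Rightarrow> nat \<Rightarrow> complex"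
  assumes "N \<ge> 3" and "Ne \<ge> 2" and "L \<ge> 1"
    and "P > 0" and "0 < \<tau>" and "\<tau> < 1" and "\<sigma>r > 0"
    and "c4 \<noteq> 0"
    and "(cmod \<alpha>)^2 + (cmod \<beta>)^2 = 1" and "\<alpha> \<noteq> 0"
    and "-pi/2 < \<theta>" and "\<theta> < pi/2"
    and h_notin_span: "\<forall>z. \<exists>i\<in>{1..N}. h i \<noteq> z * avec N \<theta> i"
    and t_orthonormal: "\<forall>m\<in>{3..N}. \<forall>m'\<in>{3..N}.
                          cinner N (t m) (t m') = (if m = m' then 1 else 0)"
    and t_orth: "\<forall>m\<in>{3..N}. cinner N (atil N \<theta>) (t m) = 0 \<and> cinner N (htil N \<theta> h) (t m) = 0"
    and t_span: "\<forall>v. cinner N (atil N \<theta>) v = 0 \<and> cinner N (htil N \<theta> h) v = 0 \<longrightarrow>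
                    (\<exists>co. \<forall>i\<in>{1..N}. v i = (\<Sum>m=3..N. co m * t m i))"
  shows "(\<forall>\<phi>. -pi/2 < \<phi> \<and> \<phi> < pi/2 \<longrightarrow>
            CRB N Ne L P \<tau> \<sigma>r c4 \<alpha> \<beta> \<theta> h t \<phi> =
              \<sigma>r^2 / (2 * (cmod c4)^2 * real L * P * \<tau> * (vnorm Ne (cder Ne \<phi>))^2
                       * (cmod \<alpha>)^2 * real N)
          \<and> (vnorm Ne (cder Ne \<phi>))^2 = pi^2 * (cos \<phi>)^2 * real Ne * ((real Ne)^2 - 1) / 12)
       \<and> (\<forall>\<epsilon>>0.
            let u = sqrt 6 * \<sigma>r / sqrt (\<epsilon> * real Ne * real N * pi^2 * real L * P * (cmod c4)^2
                                        * (cmod \<alpha>)^2 * \<tau> * ((real Ne)^2 - 1))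
            in measure (uniform_measure lborel {-pi/2<..<pi/2})
                 {\<phi> \<in> {-pi/2<..<pi/2}. CRB N Ne L P \<tau> \<sigma>r c4 \<alpha> \<beta> \<theta> h t \<phi> > \<epsilon>}
               = (if u < 1 then 2 / pi * arcsin u else 1))"
proof -
  have N0: "N > 0" using assms(1) by simp
  have sN: "sqrt (real N) \<noteq> 0" using N0 by simp
  let ?a = "avec N \<theta>"
  let ?t1 = "t1vec N \<alpha> \<beta> \<theta> h"
  have at: "cinner N ?a (t m) = 0" if "m \<in> {3..N}" for m
    using t_orth that sN unfolding cinner_atil_left by simp
  have at1: "cinner N ?a ?t1 = \<alpha> * of_real (sqrt (real N))"
    unfolding t1vec_def cinner_lin_right cinner_a_atil[OF N0] cinner_a_htil[OF N0] by simp
  have "qform N (Rx N P \<tau> \<alpha> \<beta> \<theta> h t) ?a =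
     complex_of_real (P * \<tau>) * (cinner N ?a ?t1 * cnj (cinner N ?a ?t1))
     + complex_of_real ((1 - \<tau>) * P / (real N - 2)) * (\<Sum>m=3..N. cinner N ?a (t m) * cnj (cinner N ?a (t m)))"
    unfolding Rx_def by (rule qform_expand)
  also have "\<dots> = complex_of_real (P * \<tau>) * (\<alpha> * cnj \<alpha> * of_real (real N))"
    using at N0 unfolding at1 by (simp add: algebra_simps flip: of_real_mult)
  also have "\<dots> = complex_of_real (P * \<tau> * (cmod \<alpha>)^2 * real N)"
    by (simp only: complex_norm_square[symmetric] of_real_mult mult.assoc)
  finally have Q: "Re (qform N (Rx N P \<tau> \<alpha> \<beta> \<theta> h t) ?a) = P * \<tau> * (cmod \<alpha>)^2 * real N"
    by simp
  have crb: "CRB N Ne L P \<tau> \<sigma>r c4 \<alpha> \<beta> \<theta> h t \<phi> =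
              \<sigma>r^2 / (2 * (cmod c4)^2 * real L * P * \<tau> * (vnorm Ne (cder Ne \<phi>))^2
                       * (cmod \<alpha>)^2 * real N)" for \<phi>
    unfolding CRB_def Q by (simp add: ac_simps)
  show ?thesis
  proof (intro conjI allI impI)
    fix \<phi> show "CRB N Ne L P \<tau> \<sigma>r c4 \<alpha> \<beta> \<theta> h t \<phi> =
              \<sigma>r^2 / (2 * (cmod c4)^2 * real L * P * \<tau> * (vnorm Ne (cder Ne \<phi>))^2
                       * (cmod \<alpha>)^2 * real N)" by (rule crb)
    show "(vnorm Ne (cder Ne \<phi>))^2 = pi^2 * (cos \<phi>)^2 * real Ne * ((real Ne)^2 - 1) / 12"
      by (rule vnorm_cder)
  next
    fix \<epsilon> :: real assume e: "\<epsilon> > 0"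
    define D where "D = real Ne * real N * pi^2 * real L * P * (cmod c4)^2
                                        * (cmod \<alpha>)^2 * \<tau> * ((real Ne)^2 - 1)"
    have "real Ne \<ge> 2" using assms(2) by simp
    then have "(real Ne)^2 \<ge> 2^2" by (rule power_mono) simp
    then have Ne1: "(real Ne)^2 - 1 > 0" by simp
    define K where "K = \<epsilon> * D"
    have KD: "K = \<epsilon> * real Ne * real N * pi^2 * real L * P * (cmod c4)^2
                                        * (cmod \<alpha>)^2 * \<tau> * ((real Ne)^2 - 1)"
      unfolding K_def D_def by (simp add: ac_simps)
    have D0: "D > 0" unfolding D_def using e Ne1 N0 assms by (simp add: zero_less_mult_iff)
    have K0: "K > 0" unfolding K_def using D0 e by simp
    define u where "u = sqrt 6 * \<sigma>r / sqrt K"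
    have u0: "u > 0" unfolding u_def using K0 assms(7) by simp
    have u2: "u^2 = 6 * \<sigma>r^2 / K" unfolding u_def using K0 by (simp add: power_divide power_mult_distrib)
    have key: "CRB N Ne L P \<tau> \<sigma>r c4 \<alpha> \<beta> \<theta> h t \<phi> > \<epsilon> \<longleftrightarrow> cos \<phi> < u"
      if "\<phi> \<in> {-pi/2<..<pi/2}" for \<phi>
    proof -
      have c0: "cos \<phi> > 0" using that by (auto intro!: cos_gt_zero_pi)
      have den: "2 * (cmod c4)^2 * real L * P * \<tau> * (pi^2 * (cos \<phi>)^2 * real Ne * ((real Ne)^2 - 1) / 12)
                       * (cmod \<alpha>)^2 * real N = D * (cos \<phi>)^2 / 6"
        unfolding D_def by (simp add: field_simps)
      have Dc: "D * (cos \<phi>)^2 > 0" using D0 c0 by simp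
      have "CRB N Ne L P \<tau> \<sigma>r c4 \<alpha> \<beta> \<theta> h t \<phi> = 6 * \<sigma>r^2 / (D * (cos \<phi>)^2)"
        unfolding crb vnorm_cder den by simp
      also have "\<dots> > \<epsilon> \<longleftrightarrow> \<epsilon> * (D * (cos \<phi>)^2) < 6 * \<sigma>r^2"
        using pos_less_divide_eq[OF Dc] by simp
      also have "\<dots> \<longleftrightarrow> (cos \<phi>)^2 * K < 6 * \<sigma>r^2"
        unfolding K_def by (simp add: ac_simps)
      also have "\<dots> \<longleftrightarrow> (cos \<phi>)^2 < u^2"
        unfolding u2 using pos_less_divide_eq[OF K0] by simp
      also have "\<dots> \<longleftrightarrow> cos \<phi> < u"
        using c0 u0 by (meson less_le power_less_imp_less_base power_strict_mono zero_less_numeral)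
      finally show ?thesis .
    qed
    have "{\<phi> \<in> {-pi/2<..<pi/2}. CRB N Ne L P \<tau> \<sigma>r c4 \<alpha> \<beta> \<theta> h t \<phi> > \<epsilon>} =
          {\<phi> \<in> {-pi/2<..<pi/2}. cos \<phi> < u}"
      using key by blast
    then show "let u = sqrt 6 * \<sigma>r / sqrt (\<epsilon> * real Ne * real N * pi^2 * real L * P * (cmod c4)^2
                                        * (cmod \<alpha>)^2 * \<tau> * ((real Ne)^2 - 1))
            in measure (uniform_measure lborel {-pi/2<..<pi/2})
                 {\<phi> \<in> {-pi/2<..<pi/2}. CRB N Ne L P \<tau> \<sigma>r c4 \<alpha> \<beta> \<theta> h t \<phi> > \<epsilon>}
               = (if u < 1 then 2 / pi * arcsin u else 1)"
      unfolding Let_def KD[symmetric] u_def[symmetric] using meas_uniform[OF u0] by simp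
  qed
qed

end
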